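(* Let $K$ be a field, $X=\{x_1,\dots,x_n\}$, $H=\langle h_1,\dots,h_r\rangle\subseteq K[X]$ and $f\in K[X]$. Let $Y=\{x_1,\dots,x_d\}$ be a maximum-size set of independent variables for $H$ (so $d=\dim H$), let $Z=\{x_{d+1},\dots,x_n\}$, and let $H'=\langle h_1,\dots,h_r\rangle K(Y)[Z]$. Then $$\langle h_1,\dots,h_r,f\cdot t-1\rangle K[X,t]\cap K[Y]=\langle 0\rangle \quad\text{and}\quad \langle h_1,\dots,h_r,f\rangle K[X]\cap K[Y]=\langle 0\rangle$$ (with $t$ a new variable) if and only if $f$ is a non-zero zero divisor in $K(Y)[Z]/\sqrt{H'}$.
   Context: A set $Y=\{x_1,\dots,x_d\}\subseteq X$ is a maximum-size set of independent variables for $H$ if $H\cap K[Y]=\langle 0\rangle$ and for every subset $W\subseteq X$ with more than $d$ elements $H\cap K[W]\neq\langle 0\rangle$. $K(Y)$ is the field of rational functions in $x_1,\dots,x_d$, and $\sqrt{H'}$ is the radical of $H'$ in $K(Y)[Z]$. *)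

theory Defs
  imports "HOL-Library.Poly_Mapping" "HOL-Computational_Algebra.Fraction_Field"
begin

text \<open>Multivariate polynomials over K in variables x_0, x_1, ... (indexed by nat):
  finitely supported maps from monomials (exponent vectors) to coefficients.\<close>
type_synonym 'a mpoly = "(nat \<Rightarrow>\<^sub>0 nat) \<Rightarrow>\<^sub>0 'a"

definition Var :: "nat \<Rightarrow> ('a::zero_neq_one) mpoly" where
  "Var i = Poly_Mapping.single (Poly_Mapping.single i 1) 1"

definition polys_in :: "nat set \<Rightarrow> ('a::zero) mpoly set" where
  "polys_in V = {p. \<forall>m\<in>Poly_Mapping.keys p. Poly_Mapping.keys m \<subseteq> V}"

definition gen_ideal :: "'b::comm_ring_1 set \<Rightarrow> 'b set \<Rightarrow> 'b set" where
  "gen_ideal R G = {q. \<exists>c. (\<forall>g\<in>G. c g \<in> R) \<and> q = (\<Sum>g\<in>G. c g * g)}"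

definition radical_in :: "'b::comm_ring_1 set \<Rightarrow> 'b set \<Rightarrow> 'b set" where
  "radical_in R I = {a \<in> R. \<exists>m::nat. a ^ m \<in> I}"

definition max_indep_vars :: "nat \<Rightarrow> ('a::zero) mpoly set \<Rightarrow> nat set \<Rightarrow> bool" where
  "max_indep_vars n H Y \<longleftrightarrow> Y \<subseteq> {0..<n} \<and> H \<inter> polys_in Y = {0} \<and>
     (\<forall>W. W \<subseteq> {0..<n} \<and> card W > card Y \<longrightarrow> H \<inter> polys_in W \<noteq> {0})"

text \<open>K(Y)[Z] with Y = {x_0..x_(d-1)}, Z = {x_d..x_(n-1)}, realised inside the fraction field
  of the polynomial ring as the localisation {p/q | p in K[X], 0 \<noteq> q in K[Y]}.\<close>
definition KY_Z :: "nat \<Rightarrow> nat \<Rightarrow> ('a::field) mpoly fract set" where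
  "KY_Z d n = {Fract p q | p q. p \<in> polys_in {0..<n} \<and> q \<in> polys_in {0..<d} \<and> q \<noteq> 0}"

definition nonzero_zero_divisor_mod :: "'b::comm_ring_1 set \<Rightarrow> 'b set \<Rightarrow> 'b \<Rightarrow> bool" where
  "nonzero_zero_divisor_mod R J a \<longleftrightarrow>
     a \<in> R \<and> a \<notin> J \<and> (\<exists>b\<in>R. b \<notin> J \<and> a * b \<in> J)"

end

theory Submission
  imports Defs "HOL-Library.FuncSet"
begin

section \<open>Subrings and generated ideals\<close>

definition subr :: "'b::comm_ring_1 set \<Rightarrow> bool" where
  "subr R \<longleftrightarrow> 0 \<in> R \<and> 1 \<in> R \<and> (\<forall>x\<in>R. \<forall>y\<in>R. x + y \<in> R \<and> x * y \<in> R \<and> x - y \<in> R)"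

lemma subrD:
  assumes "subr R"
  shows "0 \<in> R" "1 \<in> R" "x \<in> R \<Longrightarrow> y \<in> R \<Longrightarrow> x + y \<in> R"
    "x \<in> R \<Longrightarrow> y \<in> R \<Longrightarrow> x * y \<in> R" "x \<in> R \<Longrightarrow> y \<in> R \<Longrightarrow> x - y \<in> R"
  using assms unfolding subr_def by auto

lemma subr_uminus: "subr R \<Longrightarrow> x \<in> R \<Longrightarrow> - x \<in> R"
  by (metis diff_0 subrD(1) subrD(5))

lemma subr_sum: "subr R \<Longrightarrow> (\<And>i. i \<in> A \<Longrightarrow> f i \<in> R) \<Longrightarrow> sum f A \<in> R"
  by (induction A rule: infinite_finite_induct) (auto intro: subrD)

lemma subr_prod: "subr R \<Longrightarrow> (\<And>i. i \<in> A \<Longrightarrow> f i \<in> R) \<Longrightarrow> prod f A \<in> R"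
  by (induction A rule: infinite_finite_induct) (auto intro: subrD)

lemma subr_power: "subr R \<Longrightarrow> x \<in> R \<Longrightarrow> x ^ k \<in> R"
  by (induction k) (auto intro: subrD)

lemma gi_0: "subr R \<Longrightarrow> 0 \<in> gen_ideal R G"
  unfolding gen_ideal_def by (rule CollectI, rule exI[of _ "\<lambda>_. 0"]) (auto intro: subrD)

lemma gi_add: "subr R \<Longrightarrow> x \<in> gen_ideal R G \<Longrightarrow> y \<in> gen_ideal R G \<Longrightarrow> x + y \<in> gen_ideal R G"
  unfolding gen_ideal_def
proof (elim CollectE exE conjE, intro CollectI)
  fix c c' assume "subr R" "\<forall>g\<in>G. c g \<in> R" "x = (\<Sum>g\<in>G. c g * g)" "\<forall>g\<in>G. c' g \<in> R" "y = (\<Sum>g\<in>G. c' g * g)"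
  then show "\<exists>c. (\<forall>g\<in>G. c g \<in> R) \<and> x + y = (\<Sum>g\<in>G. c g * g)"
    by (intro exI[of _ "\<lambda>g. c g + c' g"]) (auto intro: subrD simp: sum.distrib algebra_simps)
qed

lemma gi_mult: "subr R \<Longrightarrow> r \<in> R \<Longrightarrow> x \<in> gen_ideal R G \<Longrightarrow> r * x \<in> gen_ideal R G"
  unfolding gen_ideal_def
proof (elim CollectE exE conjE, intro CollectI)
  fix c assume "subr R" "r \<in> R" "\<forall>g\<in>G. c g \<in> R" "x = (\<Sum>g\<in>G. c g * g)"
  then show "\<exists>c. (\<forall>g\<in>G. c g \<in> R) \<and> r * x = (\<Sum>g\<in>G. c g * g)"
    by (intro exI[of _ "\<lambda>g. r * c g"]) (auto intro: subrD simp: sum_distrib_left algebra_simps)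
qed

lemma gi_uminus: "subr R \<Longrightarrow> x \<in> gen_ideal R G \<Longrightarrow> - x \<in> gen_ideal R G"
  using gi_mult[of R "-1" x G] subr_uminus[of R 1] subrD(2)[of R] by simp

lemma gi_diff: "subr R \<Longrightarrow> x \<in> gen_ideal R G \<Longrightarrow> y \<in> gen_ideal R G \<Longrightarrow> x - y \<in> gen_ideal R G"
  using gi_add[of R x G "-y"] gi_uminus[of R y G] by simp

lemma gi_sum: "subr R \<Longrightarrow> (\<And>i. i \<in> A \<Longrightarrow> f i \<in> gen_ideal R G) \<Longrightarrow> sum f A \<in> gen_ideal R G"
  by (induction A rule: infinite_finite_induct) (auto intro: gi_add gi_0)

lemma gi_gen: "subr R \<Longrightarrow> finite G \<Longrightarrow> a \<in> G \<Longrightarrow> a \<in> gen_ideal R G"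
proof -
  assume a: "subr R" "finite G" "a \<in> G"
  have "(\<Sum>g\<in>G. (if g = a then 1 else 0) * g) = (\<Sum>g\<in>G. if g = a then g else 0)"
    by (rule sum.cong) auto
  also have "\<dots> = a" using a by (simp add: sum.delta')
  finally show ?thesis unfolding gen_ideal_def using a
    by (intro CollectI exI[of _ "\<lambda>g. if g = a then 1 else 0"]) (auto intro: subrD)
qed

lemma gi_mono_R: "R \<subseteq> R' \<Longrightarrow> gen_ideal R G \<subseteq> gen_ideal R' G"
  unfolding gen_ideal_def by blast

lemma gi_mono_G:
  assumes "subr R" "finite G'" "G \<subseteq> G'"
  shows "gen_ideal R G \<subseteq> gen_ideal R G'"
proof
  fix x assume "x \<in> gen_ideal R G"
  then obtain c where c: "\<forall>g\<in>G. c g \<in> R" "x = (\<Sum>g\<in>G. c g * g)" unfolding gen_ideal_def by auto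
  have "x = (\<Sum>g\<in>G'. (if g \<in> G then c g else 0) * g)"
    unfolding c(2) by (rule sum.mono_neutral_cong_left) (use assms in auto)
  then show "x \<in> gen_ideal R G'" unfolding gen_ideal_def using c(1) assms(1)
    by (intro CollectI exI[of _ "\<lambda>g. if g \<in> G then c g else 0"]) (auto intro: subrD)
qed

lemma gi_insertI:
  assumes "subr R" "finite G" "x \<in> gen_ideal R G" "c \<in> R"
  shows "x + c * a \<in> gen_ideal R (insert a G)"
proof -
  have "x \<in> gen_ideal R (insert a G)" using gi_mono_G[of R "insert a G" G] assms by auto
  moreover have "c * a \<in> gen_ideal R (insert a G)"
    using assms by (intro gi_mult gi_gen) auto
  ultimately show ?thesis using assms(1) by (rule gi_add[rotated])
qed

lemma gi_insertE:
  assumes "subr R" "finite G" "y \<in> gen_ideal R (insert a G)"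
  obtains c x where "c \<in> R" "x \<in> gen_ideal R G" "y = c * a + x"
proof (cases "a \<in> G")
  case True
  then have "y \<in> gen_ideal R G" using assms(3) by (simp add: insert_absorb)
  then show ?thesis using that[of 0 y] assms(1) by (auto intro: subrD)
next
  case False
  obtain c where c: "\<forall>g\<in>insert a G. c g \<in> R" "y = (\<Sum>g\<in>insert a G. c g * g)"
    using assms(3) unfolding gen_ideal_def by auto
  have "y = c a * a + (\<Sum>g\<in>G. c g * g)" using c(2) False assms(2) by simp
  moreover have "(\<Sum>g\<in>G. c g * g) \<in> gen_ideal R G" unfolding gen_ideal_def using c(1) by auto
  ultimately show ?thesis using that c(1) by auto
qed

section \<open>Polynomials in a set of variables\<close>

lemma keys_add_nat: "Poly_Mapping.keys (a + b :: 'x \<Rightarrow>\<^sub>0 nat) = Poly_Mapping.keys a \<union> Poly_Mapping.keys b"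
  by (auto simp: in_keys_iff lookup_add)

lemma subr_polys_in: "subr (polys_in V :: 'a::comm_ring_1 mpoly set)"
proof -
  have a: "x + y \<in> polys_in V" "x - y \<in> polys_in V" "x * y \<in> polys_in V"
    if x: "x \<in> polys_in V" and y: "y \<in> polys_in V" for x y :: "'a mpoly"
  proof -
    show "x + y \<in> polys_in V"
      using x y keys_add[of x y] unfolding polys_in_def by blast
    show "x - y \<in> polys_in V"
      using x y keys_diff[of x y] unfolding polys_in_def by blast
    show "x * y \<in> polys_in V"
    proof (unfold polys_in_def, intro CollectI ballI)
      fix m assume "m \<in> Poly_Mapping.keys (x * y)"
      then obtain a b where "m = a + b" "a \<in> Poly_Mapping.keys x" "b \<in> Poly_Mapping.keys y"
        using keys_mult[of x y] by blast
      then show "Poly_Mapping.keys m \<subseteq> V" using x y unfolding polys_in_def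
        by (simp add: keys_add_nat)
    qed
  qed
  have "0 \<in> polys_in V" "1 \<in> polys_in V" unfolding polys_in_def by (simp_all add: keys_one)
  then show ?thesis unfolding subr_def by (simp add: a)
qed

lemma polys_in_mono: "V \<subseteq> W \<Longrightarrow> polys_in V \<subseteq> polys_in W"
  unfolding polys_in_def by auto

lemma keys_Var: "Poly_Mapping.keys (Var i :: 'a::zero_neq_one mpoly) = {Poly_Mapping.single i 1}"
  unfolding Var_def by simp

lemma Var_in: "i \<in> V \<Longrightarrow> Var i \<in> polys_in V"
  unfolding polys_in_def by (simp add: keys_Var)

lemma single_in: "Poly_Mapping.keys m \<subseteq> V \<Longrightarrow> Poly_Mapping.single m c \<in> polys_in V"
  unfolding polys_in_def by simp


section \<open>Embedding into the fraction field\<close>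

definition emb :: "'a::field mpoly \<Rightarrow> 'a mpoly fract" where
  "emb p = Fract p 1"

lemma emb_0 [simp]: "emb 0 = 0" and emb_1 [simp]: "emb 1 = 1"
  unfolding emb_def by (simp_all add: fract_collapse)

lemma emb_add [simp]: "emb (p + q) = emb p + emb q"
  and emb_mult [simp]: "emb (p * q) = emb p * emb q"
  and emb_diff [simp]: "emb (p - q) = emb p - emb q"
  and emb_uminus [simp]: "emb (- p) = - emb p"
  unfolding emb_def by simp_all

lemma emb_sum: "emb (sum f A) = (\<Sum>x\<in>A. emb (f x))"
  by (induction A rule: infinite_finite_induct) simp_all

lemma emb_prod: "emb (prod f A) = (\<Prod>x\<in>A. emb (f x))"
  by (induction A rule: infinite_finite_induct) simp_all

lemma emb_power: "emb (p ^ k) = emb p ^ k"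
  by (induction k) simp_all

lemma emb_inject [simp]: "emb p = emb q \<longleftrightarrow> p = q"
  unfolding emb_def by (simp add: eq_fract)

lemma emb_eq_0 [simp]: "emb p = 0 \<longleftrightarrow> p = 0"
  using emb_inject[of p 0] by simp

lemma Fract_eq_emb_div: "q \<noteq> 0 \<Longrightarrow> Fract p q = emb p / emb q"
  unfolding emb_def by (simp add: divide_fract)

lemma Fract_eq_emb_mult: "Fract p q = emb p * inverse (emb q)"
  unfolding emb_def by simp

lemma pm_sum_single:
  fixes p :: "'x \<Rightarrow>\<^sub>0 'b::comm_monoid_add"
  shows "(\<Sum>m\<in>Poly_Mapping.keys p. Poly_Mapping.single m (Poly_Mapping.lookup p m)) = p"
proof (rule poly_mapping_eqI)
  fix k
  have "Poly_Mapping.lookup (\<Sum>m\<in>Poly_Mapping.keys p. Poly_Mapping.single m (Poly_Mapping.lookup p m)) k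
      = (\<Sum>m\<in>Poly_Mapping.keys p. if m = k then Poly_Mapping.lookup p m else 0)"
    by (simp add: lookup_sum lookup_single when_def eq_commute)
  also have "\<dots> = Poly_Mapping.lookup p k"
    by (simp add: sum.delta' in_keys_iff)
  finally show "Poly_Mapping.lookup (\<Sum>m\<in>Poly_Mapping.keys p. Poly_Mapping.single m (Poly_Mapping.lookup p m)) k
      = Poly_Mapping.lookup p k" .
qed

lemma Var_power: "(Var i :: 'a::comm_ring_1 mpoly) ^ k = Poly_Mapping.single (Poly_Mapping.single i k) 1"
proof (induction k)
  case 0 then show ?case by simp
next
  case (Suc k)
  then show ?case by (simp add: Var_def mult_single single_add[symmetric] add.commute)
qed

lemma prod_single:
  "(\<Prod>i\<in>A. Poly_Mapping.single (g i) (1::'a::comm_ring_1)) = Poly_Mapping.single (\<Sum>i\<in>A. g i) 1"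
  by (induction A rule: infinite_finite_induct) (simp_all add: mult_single)

lemma single_as_prod:
  "(Poly_Mapping.single m c :: 'a::comm_ring_1 mpoly)
   = Poly_Mapping.single 0 c * (\<Prod>i\<in>Poly_Mapping.keys m. Var i ^ Poly_Mapping.lookup m i)"
  by (simp add: Var_power prod_single pm_sum_single mult_single)

section \<open>Evaluation homomorphism\<close>

definition mono_ev :: "(nat \<Rightarrow> 'a::field mpoly fract) \<Rightarrow> (nat \<Rightarrow>\<^sub>0 nat) \<Rightarrow> 'a mpoly fract" where
  "mono_ev \<phi> m = (\<Prod>i\<in>Poly_Mapping.keys m. \<phi> i ^ Poly_Mapping.lookup m i)"

definition ev :: "(nat \<Rightarrow> 'a::field mpoly fract) \<Rightarrow> 'a mpoly \<Rightarrow> 'a mpoly fract" where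
  "ev \<phi> p = (\<Sum>m\<in>Poly_Mapping.keys p. emb (Poly_Mapping.single 0 (Poly_Mapping.lookup p m)) * mono_ev \<phi> m)"

lemma mono_ev_superset:
  assumes "finite S" "Poly_Mapping.keys m \<subseteq> S"
  shows "mono_ev \<phi> m = (\<Prod>i\<in>S. \<phi> i ^ Poly_Mapping.lookup m i)"
  unfolding mono_ev_def
  by (rule prod.mono_neutral_left) (use assms in \<open>auto simp: in_keys_iff\<close>)

lemma mono_ev_add: "mono_ev \<phi> (a + b) = mono_ev \<phi> a * mono_ev \<phi> b"
proof -
  let ?S = "Poly_Mapping.keys a \<union> Poly_Mapping.keys b"
  have "mono_ev \<phi> (a + b) = (\<Prod>i\<in>?S. \<phi> i ^ Poly_Mapping.lookup (a + b) i)"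
    by (rule mono_ev_superset) (auto simp: keys_add_nat)
  also have "\<dots> = (\<Prod>i\<in>?S. \<phi> i ^ Poly_Mapping.lookup a i) * (\<Prod>i\<in>?S. \<phi> i ^ Poly_Mapping.lookup b i)"
    by (simp add: lookup_add power_add prod.distrib)
  also have "\<dots> = mono_ev \<phi> a * mono_ev \<phi> b"
    by (subst (1 2) mono_ev_superset[symmetric]) auto
  finally show ?thesis .
qed

lemma mono_ev_0 [simp]: "mono_ev \<phi> 0 = 1"
  unfolding mono_ev_def by simp

lemma ev_superset:
  assumes "finite S" "Poly_Mapping.keys p \<subseteq> S"
  shows "ev \<phi> p = (\<Sum>m\<in>S. emb (Poly_Mapping.single 0 (Poly_Mapping.lookup p m)) * mono_ev \<phi> m)"
  unfolding ev_def
  by (rule sum.mono_neutral_left) (use assms in \<open>auto simp: in_keys_iff\<close>)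

lemma ev_add: "ev \<phi> (p + q) = ev \<phi> p + ev \<phi> q"
proof -
  let ?S = "Poly_Mapping.keys p \<union> Poly_Mapping.keys q"
  have "ev \<phi> (p + q) = (\<Sum>m\<in>?S. emb (Poly_Mapping.single 0 (Poly_Mapping.lookup (p + q) m)) * mono_ev \<phi> m)"
    by (rule ev_superset) (use keys_add[of p q] in auto)
  also have "\<dots> = (\<Sum>m\<in>?S. emb (Poly_Mapping.single 0 (Poly_Mapping.lookup p m)) * mono_ev \<phi> m)
     + (\<Sum>m\<in>?S. emb (Poly_Mapping.single 0 (Poly_Mapping.lookup q m)) * mono_ev \<phi> m)"
    by (simp add: lookup_add single_add distrib_right sum.distrib)
  also have "\<dots> = ev \<phi> p + ev \<phi> q"
    by (subst (1 2) ev_superset[symmetric]) auto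
  finally show ?thesis .
qed

lemma ev_0 [simp]: "ev \<phi> 0 = 0"
  unfolding ev_def by simp

lemma ev_single: "ev \<phi> (Poly_Mapping.single m c) = emb (Poly_Mapping.single 0 c) * mono_ev \<phi> m"
  unfolding ev_def by (cases "c = 0") simp_all

lemma ev_sum: "ev \<phi> (sum f A) = (\<Sum>x\<in>A. ev \<phi> (f x))"
  by (induction A rule: infinite_finite_induct) (simp_all add: ev_add)

lemma ev_uminus: "ev \<phi> (- p) = - ev \<phi> p"
  using ev_add[of \<phi> p "-p"] by (simp add: eq_neg_iff_add_eq_0 add.commute)

lemma ev_diff: "ev \<phi> (p - q) = ev \<phi> p - ev \<phi> q"
  using ev_add[of \<phi> p "-q"] ev_uminus[of \<phi> q] by simp

lemma emb_single0_mult: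
  "emb (Poly_Mapping.single 0 (a * b)) = emb (Poly_Mapping.single 0 a) * emb (Poly_Mapping.single 0 b)"
  by (simp add: emb_mult[symmetric] mult_single del: emb_mult)

lemma ev_mult: "ev \<phi> (p * q) = ev \<phi> p * ev \<phi> q"
proof -
  let ?s = "\<lambda>p m. Poly_Mapping.single m (Poly_Mapping.lookup p m)"
  have "p * q = (\<Sum>a\<in>Poly_Mapping.keys p. ?s p a) * (\<Sum>b\<in>Poly_Mapping.keys q. ?s q b)"
    by (simp add: pm_sum_single)
  also have "\<dots> = (\<Sum>a\<in>Poly_Mapping.keys p. \<Sum>b\<in>Poly_Mapping.keys q. ?s p a * ?s q b)"
    by (rule sum_product)
  finally have "ev \<phi> (p * q) = (\<Sum>a\<in>Poly_Mapping.keys p. \<Sum>b\<in>Poly_Mapping.keys q. ev \<phi> (?s p a * ?s q b))"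
    by (simp add: ev_sum)
  also have "\<dots> = (\<Sum>a\<in>Poly_Mapping.keys p. \<Sum>b\<in>Poly_Mapping.keys q. ev \<phi> (?s p a) * ev \<phi> (?s q b))"
    by (simp add: mult_single ev_single mono_ev_add emb_single0_mult ac_simps)
  also have "\<dots> = (\<Sum>a\<in>Poly_Mapping.keys p. ev \<phi> (?s p a)) * (\<Sum>b\<in>Poly_Mapping.keys q. ev \<phi> (?s q b))"
    by (simp add: sum_product)
  also have "\<dots> = ev \<phi> p * ev \<phi> q"
    unfolding ev_single by (simp add: ev_def)
  finally show ?thesis .
qed


lemma ev_1 [simp]: "ev \<phi> 1 = 1"
proof -
  have "ev \<phi> 1 = ev \<phi> (Poly_Mapping.single 0 1)" by simp
  also have "\<dots> = 1" unfolding ev_single by (simp add: emb_1[unfolded single_one[symmetric]])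
  finally show ?thesis .
qed

lemma ev_Var [simp]: "ev \<phi> (Var i) = \<phi> i"
  unfolding Var_def ev_single mono_ev_def by (simp add: emb_1[unfolded single_one[symmetric]])

lemma ev_power: "ev \<phi> (p ^ k) = ev \<phi> p ^ k"
  by (induction k) (simp_all add: ev_mult)

lemma ev_in:
  assumes T: "subr T" and C: "\<And>c. emb (Poly_Mapping.single 0 c) \<in> T"
    and V: "\<And>i. i \<in> V \<Longrightarrow> \<phi> i \<in> T" and p: "p \<in> polys_in V"
  shows "ev \<phi> p \<in> T"
  unfolding ev_def
proof (rule subr_sum[OF T], rule subrD(4)[OF T C])
  fix m assume "m \<in> Poly_Mapping.keys p"
  then have "Poly_Mapping.keys m \<subseteq> V" using p unfolding polys_in_def by auto
  then show "mono_ev \<phi> m \<in> T" unfolding mono_ev_def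
    by (intro subr_prod[OF T] subr_power[OF T] V) auto
qed

lemma ev_cong:
  assumes "\<And>i. i \<in> V \<Longrightarrow> \<phi> i = \<psi> i" "p \<in> polys_in V"
  shows "ev \<phi> p = ev \<psi> p"
  unfolding ev_def
proof (rule sum.cong[OF refl])
  fix m assume "m \<in> Poly_Mapping.keys p"
  then have "Poly_Mapping.keys m \<subseteq> V" using assms(2) unfolding polys_in_def by auto
  then have "mono_ev \<phi> m = mono_ev \<psi> m" unfolding mono_ev_def
    by (intro prod.cong) (use assms(1) in auto)
  then show "emb (Poly_Mapping.single 0 (Poly_Mapping.lookup p m)) * mono_ev \<phi> m =
         emb (Poly_Mapping.single 0 (Poly_Mapping.lookup p m)) * mono_ev \<psi> m" by simp
qed

lemma ev_emb: "ev (\<lambda>i. emb (Var i)) p = emb p"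
proof -
  have s: "ev (\<lambda>i. emb (Var i)) (Poly_Mapping.single m c) = emb (Poly_Mapping.single m c)" for m c
    unfolding ev_single mono_ev_def
    by (subst (2) single_as_prod) (simp add: emb_prod emb_power)
  have "ev (\<lambda>i. emb (Var i)) p = ev (\<lambda>i. emb (Var i))
      (\<Sum>m\<in>Poly_Mapping.keys p. Poly_Mapping.single m (Poly_Mapping.lookup p m))"
    by (simp add: pm_sum_single)
  also have "\<dots> = emb p"
    by (subst (2) pm_sum_single[symmetric]) (simp add: ev_sum emb_sum s)
  finally show ?thesis .
qed


section \<open>Localisations\<close>

definition locz :: "'a::field mpoly set \<Rightarrow> 'a mpoly set \<Rightarrow> 'a mpoly fract set" where
  "locz D P = {Fract p q | p q. p \<in> P \<and> q \<in> D}"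

definition mclosed :: "'a::field mpoly set \<Rightarrow> 'a mpoly set \<Rightarrow> bool" where
  "mclosed D P \<longleftrightarrow> subr P \<and> D \<subseteq> P \<and> 1 \<in> D \<and> 0 \<notin> D \<and> (\<forall>a\<in>D. \<forall>b\<in>D. a * b \<in> D)"

lemma mclosedD:
  assumes "mclosed D P"
  shows "subr P" "D \<subseteq> P" "1 \<in> D" "0 \<notin> D" "a \<in> D \<Longrightarrow> b \<in> D \<Longrightarrow> a * b \<in> D"
  using assms unfolding mclosed_def by auto

lemma locz_emb: "mclosed D P \<Longrightarrow> p \<in> P \<Longrightarrow> emb p \<in> locz D P"
  unfolding locz_def emb_def using mclosedD(3) by blast

lemma subr_locz:
  assumes M: "mclosed D P"
  shows "subr (locz D P)"
proof -
  note m = mclosedD[OF M]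
  have nz: "q \<noteq> 0" if "q \<in> D" for q using m(4) that by auto
  have 0: "0 \<in> locz D P" using locz_emb[OF M subrD(1)[OF m(1)]] by simp
  have 1: "1 \<in> locz D P" using locz_emb[OF M subrD(2)[OF m(1)]] by simp
  have "x + y \<in> locz D P \<and> x * y \<in> locz D P \<and> x - y \<in> locz D P"
    if x: "x \<in> locz D P" and y: "y \<in> locz D P" for x y
  proof -
    obtain a b where ab: "x = Fract a b" "a \<in> P" "b \<in> D" using x unfolding locz_def by auto
    obtain c e where ce: "y = Fract c e" "c \<in> P" "e \<in> D" using y unfolding locz_def by auto
    have bP: "b \<in> P" "e \<in> P" using ab ce m(2) by auto
    have "x + y = Fract (a * e + c * b) (b * e)" using ab ce nz by simp
    moreover have "x - y = Fract (a * e - c * b) (b * e)" using ab ce nz by simp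
    moreover have "x * y = Fract (a * c) (b * e)" using ab ce by simp
    moreover have "b * e \<in> D" using ab ce m(5) by auto
    moreover have "a * e + c * b \<in> P" "a * e - c * b \<in> P" "a * c \<in> P"
      using ab ce bP m(1) by (auto intro!: subrD)
    ultimately show ?thesis unfolding locz_def by blast
  qed
  then show ?thesis unfolding subr_def using 0 1 by blast
qed

lemma locz_clear:
  assumes M: "mclosed D P" and G: "finite G" and c: "\<And>g. g \<in> G \<Longrightarrow> c g \<in> locz D P"
  shows "\<exists>Q\<in>D. \<exists>R. \<forall>g\<in>G. R g \<in> P \<and> emb Q * c g = emb (R g)"
  using G c
proof (induction G rule: finite_induct)
  case empty
  then show ?case using mclosedD(3)[OF M] by blast
next
  case (insert g0 G)
  note m = mclosedD[OF M]
  obtain Q R where QR: "Q \<in> D" "\<forall>g\<in>G. R g \<in> P \<and> emb Q * c g = emb (R g)" using insert by auto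
  obtain a b where ab: "c g0 = Fract a b" "a \<in> P" "b \<in> D" using insert(4)[of g0] unfolding locz_def by auto
  have b0: "b \<noteq> 0" using ab m(4) by auto
  have QP: "Q \<in> P" "b \<in> P" using QR ab m(2) by auto
  define R' where "R' g = (if g = g0 then Q * a else R g * b)" for g
  have "\<forall>g\<in>insert g0 G. R' g \<in> P \<and> emb (Q * b) * c g = emb (R' g)"
  proof
    fix g assume g: "g \<in> insert g0 G"
    show "R' g \<in> P \<and> emb (Q * b) * c g = emb (R' g)"
    proof (cases "g = g0")
      case True
      have "emb (Q * b) * c g = Fract (Q * b * a) b" using True ab by (simp add: emb_def)
      also have "\<dots> = emb (Q * a)" using b0 by (simp add: emb_def eq_fract)
      finally show ?thesis using True QP ab m(1) by (auto simp: R'_def intro: subrD)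
    next
      case False
      then have gG: "g \<in> G" using g by auto
      have "emb (Q * b) * c g = emb b * (emb Q * c g)" by simp
      also have "\<dots> = emb (R g * b)" using QR gG by simp
      finally show ?thesis using False QR gG QP m(1) by (auto simp: R'_def intro: subrD)
    qed
  qed
  moreover have "Q * b \<in> D" using QR ab m(5) by auto
  ultimately show ?case by blast
qed

lemma gi_emb_sum:
  assumes "finite G"
  shows "x \<in> gen_ideal R (emb ` G) \<longleftrightarrow> (\<exists>c. (\<forall>g\<in>G. c g \<in> R) \<and> x = (\<Sum>g\<in>G. c g * emb g))"
proof
  assume "x \<in> gen_ideal R (emb ` G)"
  then obtain c where c: "\<forall>h\<in>emb ` G. c h \<in> R" "x = (\<Sum>h\<in>emb ` G. c h * h)" unfolding gen_ideal_def by auto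
  have "x = (\<Sum>g\<in>G. c (emb g) * emb g)" unfolding c(2)
    by (subst sum.reindex) (auto simp: inj_on_def)
  then show "\<exists>c. (\<forall>g\<in>G. c g \<in> R) \<and> x = (\<Sum>g\<in>G. c g * emb g)" using c(1)
    by (intro exI[of _ "\<lambda>g. c (emb g)"]) auto
next
  assume "\<exists>c. (\<forall>g\<in>G. c g \<in> R) \<and> x = (\<Sum>g\<in>G. c g * emb g)"
  then obtain c where c: "\<forall>g\<in>G. c g \<in> R" "x = (\<Sum>g\<in>G. c g * emb g)" by auto
  define c' where "c' h = c (the_inv_into G emb h)" for h
  have inj: "inj_on emb G" by (auto simp: inj_on_def)
  have "x = (\<Sum>h\<in>emb ` G. c' h * h)" unfolding c(2) c'_def
    by (subst sum.reindex[OF inj]) (simp add: the_inv_into_f_f[OF inj])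
  moreover have "\<forall>h\<in>emb ` G. c' h \<in> R" unfolding c'_def using c(1)
    by (auto simp: the_inv_into_f_f[OF inj])
  ultimately show "x \<in> gen_ideal R (emb ` G)" unfolding gen_ideal_def by blast
qed

lemma gi_locz_clear:
  assumes M: "mclosed D P" and G: "finite G" and x: "x \<in> gen_ideal (locz D P) (emb ` G)"
  shows "\<exists>Q\<in>D. \<exists>y\<in>gen_ideal P G. emb Q * x = emb y"
proof -
  obtain c where c: "\<forall>g\<in>G. c g \<in> locz D P" "x = (\<Sum>g\<in>G. c g * emb g)"
    using x gi_emb_sum[OF G] by auto
  obtain Q R where QR: "Q \<in> D" "\<forall>g\<in>G. R g \<in> P \<and> emb Q * c g = emb (R g)"
    using locz_clear[OF M G, of c] c(1) by auto
  have "emb Q * x = (\<Sum>g\<in>G. emb Q * c g * emb g)" unfolding c(2) by (simp add: sum_distrib_left ac_simps)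
  also have "\<dots> = emb (\<Sum>g\<in>G. R g * g)" using QR(2) by (simp add: emb_sum)
  finally have "emb Q * x = emb (\<Sum>g\<in>G. R g * g)" .
  moreover have "(\<Sum>g\<in>G. R g * g) \<in> gen_ideal P G" unfolding gen_ideal_def using QR(2) by auto
  ultimately show ?thesis using QR(1) by blast
qed

lemma gi_emb_intro:
  assumes M: "mclosed D P" and G: "finite G" and y: "y \<in> gen_ideal P G"
  shows "emb y \<in> gen_ideal (locz D P) (emb ` G)"
proof -
  obtain c where c: "\<forall>g\<in>G. c g \<in> P" "y = (\<Sum>g\<in>G. c g * g)" using y unfolding gen_ideal_def by auto
  have "emb y = (\<Sum>g\<in>G. emb (c g) * emb g)" unfolding c(2) by (simp add: emb_sum)
  moreover have "\<forall>g\<in>G. emb (c g) \<in> locz D P" using c(1) locz_emb[OF M] by blast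
  ultimately show ?thesis unfolding gi_emb_sum[OF G] by (intro exI[of _ "\<lambda>g. emb (c g)"]) simp
qed


section \<open>Linear dependence\<close>

lemma lin_dep:
  fixes F I :: "'b::field set" and B :: "'b set"
  assumes F: "subr F" and Finv: "\<And>x. x \<in> F \<Longrightarrow> inverse x \<in> F"
    and I0: "0 \<in> I" and Iadd: "\<And>x y. x \<in> I \<Longrightarrow> y \<in> I \<Longrightarrow> x + y \<in> I"
    and Imul: "\<And>r x. r \<in> F \<Longrightarrow> x \<in> I \<Longrightarrow> r * x \<in> I"
  shows "finite B \<Longrightarrow> finite A \<Longrightarrow> card B < card A \<Longrightarrow> (\<forall>i\<in>A. \<forall>b\<in>B. a i b \<in> F)
    \<Longrightarrow> (\<forall>i\<in>A. v i - (\<Sum>b\<in>B. a i b * b) \<in> I)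
    \<Longrightarrow> \<exists>c. (\<forall>i\<in>A. c i \<in> F) \<and> (\<exists>i\<in>A. c i \<noteq> 0) \<and> (\<Sum>i\<in>A. c i * v i) \<in> I"
proof (induction B arbitrary: A a v rule: finite_induct)
  case empty
  then obtain i0 where i0: "i0 \<in> A" by fastforce
  have "(\<Sum>i\<in>A. (if i = i0 then 1 else 0) * v i) = (\<Sum>i\<in>A. if i = i0 then v i else 0)"
    by (rule sum.cong) auto
  also have "\<dots> = v i0" using i0 empty by (simp add: sum.delta')
  finally show ?case using i0 empty F
    by (intro exI[of _ "\<lambda>i. if i = i0 then 1 else 0"]) (auto intro: subrD)
next
  case (insert w B)
  note Isum = subr_sum
  have Ineg: "x \<in> I \<Longrightarrow> - x \<in> I" for x
    using Imul[of "-1" x] subr_uminus[OF F subrD(2)[OF F]] by simp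
  have Idiff: "x \<in> I \<Longrightarrow> y \<in> I \<Longrightarrow> x - y \<in> I" for x y
    using Iadd[of x "-y"] Ineg[of y] by simp
  show ?case
  proof (cases "\<forall>i\<in>A. a i w = 0")
    case True
    have "\<forall>i\<in>A. v i - (\<Sum>b\<in>B. a i b * b) \<in> I"
      using insert.prems(4) True insert(1,2) by simp
    moreover have "card B < card A" using insert by simp
    ultimately show ?thesis using insert by (intro insert.IH) auto
  next
    case False
    then obtain i0 where i0: "i0 \<in> A" "a i0 w \<noteq> 0" by auto
    define \<alpha> where "\<alpha> = a i0 w"
    define \<beta> where "\<beta> i = a i w * inverse \<alpha>" for i
    define A' where "A' = A - {i0}"
    define v' where "v' i = v i - \<beta> i * v i0" for i
    define a' where "a' i b = a i b - \<beta> i * a i0 b" for i b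
    have \<alpha>0: "\<alpha> \<noteq> 0" using i0 \<alpha>_def by simp
    have \<alpha>F: "\<alpha> \<in> F" using insert.prems(3) i0 \<alpha>_def by auto
    have \<beta>F: "i \<in> A \<Longrightarrow> \<beta> i \<in> F" for i
      unfolding \<beta>_def using insert.prems(3) Finv[OF \<alpha>F] by (auto intro: subrD[OF F])
    have \<beta>\<alpha>: "\<beta> i * \<alpha> = a i w" for i unfolding \<beta>_def using \<alpha>0 by simp
    have cardA': "card B < card A'" using insert i0 unfolding A'_def by simp
    have a'F: "\<forall>i\<in>A'. \<forall>b\<in>B. a' i b \<in> F"
      unfolding a'_def A'_def using insert.prems(3) \<beta>F i0(1) by (auto intro!: subrD[OF F])
    have rep: "\<forall>i\<in>A'. v' i - (\<Sum>b\<in>B. a' i b * b) \<in> I"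
    proof
      fix i assume i: "i \<in> A'"
      let ?S1 = "\<Sum>b\<in>B. a i b * b" and ?S0 = "\<Sum>b\<in>B. a i0 b * b"
      have e1: "v i - (a i w * w + ?S1) \<in> I" using insert.prems(4) i insert(1,2) unfolding A'_def by simp
      have e0: "v i0 - (\<alpha> * w + ?S0) \<in> I" using insert.prems(4) i0 insert(1,2) unfolding \<alpha>_def by simp
      have sa: "(\<Sum>b\<in>B. a' i b * b) = ?S1 - \<beta> i * ?S0"
        unfolding a'_def by (simp add: algebra_simps sum_subtractf sum_distrib_left)
      have "v' i - (\<Sum>b\<in>B. a' i b * b) = (v i - (a i w * w + ?S1)) - \<beta> i * (v i0 - (\<alpha> * w + ?S0))"
        unfolding sa v'_def using \<beta>\<alpha>[of i] by (simp add: algebra_simps)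
      also have "\<dots> \<in> I" using e1 e0 \<beta>F i unfolding A'_def by (auto intro!: Idiff Imul)
      finally show "v' i - (\<Sum>b\<in>B. a' i b * b) \<in> I" .
    qed
    obtain c' where c': "\<forall>i\<in>A'. c' i \<in> F" "\<exists>i\<in>A'. c' i \<noteq> 0" "(\<Sum>i\<in>A'. c' i * v' i) \<in> I"
      using insert.IH[of A' a' v'] cardA' a'F rep insert.prems(1) unfolding A'_def by auto
    define c where "c i = (if i = i0 then - (\<Sum>j\<in>A'. c' j * \<beta> j) else c' i)" for i
    have "(\<Sum>i\<in>A. c i * v i) = c i0 * v i0 + (\<Sum>i\<in>A'. c i * v i)"
      unfolding A'_def using i0 insert.prems(1) by (simp add: sum.remove)
    also have "(\<Sum>i\<in>A'. c i * v i) = (\<Sum>i\<in>A'. c' i * v i)"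
      unfolding c_def A'_def by (rule sum.cong) auto
    also have "c i0 * v i0 + (\<Sum>i\<in>A'. c' i * v i) = (\<Sum>i\<in>A'. c' i * v' i)"
      unfolding c_def v'_def by (simp add: algebra_simps sum_subtractf sum_distrib_left)
    finally have "(\<Sum>i\<in>A. c i * v i) \<in> I" using c'(3) by simp
    moreover have "\<forall>i\<in>A. c i \<in> F"
      unfolding c_def using c'(1) \<beta>F unfolding A'_def
      by (auto intro!: subr_uminus[OF F] subr_sum[OF F] subrD(4)[OF F])
    moreover have "\<exists>i\<in>A. c i \<noteq> 0"
    proof -
      obtain j where "j \<in> A'" "c' j \<noteq> 0" using c'(2) by auto
      then show ?thesis unfolding c_def A'_def by (intro bexI[of _ j]) auto
    qed
    ultimately show ?thesis by blast
  qed
qed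


section \<open>Decomposition with respect to one variable\<close>

lemma decomp:
  fixes g :: "'a::field mpoly"
  assumes g: "g \<in> polys_in (insert j Y)" "g \<noteq> 0"
  shows "\<exists>D cf. (\<forall>k. cf k \<in> polys_in Y) \<and> cf D \<noteq> 0 \<and> g = (\<Sum>k\<le>D. cf k * Var j ^ k)"
proof -
  let ?L = "\<lambda>m. Poly_Mapping.lookup m j"
  let ?K = "Poly_Mapping.keys g"
  let ?S = "\<lambda>k. {m. m \<in> ?K \<and> ?L m = k}"
  define D where "D = Max (?L ` ?K)"
  define cf where "cf k = (\<Sum>m\<in>?S k. Poly_Mapping.single (m - Poly_Mapping.single j k) (Poly_Mapping.lookup g m))" for k
  have backeq: "m - Poly_Mapping.single j k + Poly_Mapping.single j k = m" if "?L m = k" for m :: "nat \<Rightarrow>\<^sub>0 nat" and k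
    by (rule poly_mapping_eqI) (use that in \<open>auto simp: lookup_add lookup_minus lookup_single when_def\<close>)
  have c1: "cf k * Var j ^ k = (\<Sum>m\<in>?S k. Poly_Mapping.single m (Poly_Mapping.lookup g m))" for k
    unfolding cf_def Var_power sum_distrib_right mult_single
    by (rule sum.cong) (auto simp: backeq)
  have fin: "finite ?K" by simp
  have ne: "?K \<noteq> {}" using g(2) by simp
  have "(\<Sum>k\<le>D. cf k * Var j ^ k) = (\<Sum>k\<le>D. \<Sum>m\<in>?S k. Poly_Mapping.single m (Poly_Mapping.lookup g m))"
    by (simp add: c1)
  also have "\<dots> = (\<Sum>m\<in>?K. Poly_Mapping.single m (Poly_Mapping.lookup g m))"
    by (rule sum.group) (auto simp: D_def)
  also have "\<dots> = g" by (rule pm_sum_single)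
  finally have rep: "g = (\<Sum>k\<le>D. cf k * Var j ^ k)" ..
  have inY: "cf k \<in> polys_in Y" for k
    unfolding cf_def
  proof (rule subr_sum[OF subr_polys_in], rule single_in)
    fix m assume m: "m \<in> ?S k"
    show "Poly_Mapping.keys (m - Poly_Mapping.single j k) \<subseteq> Y"
    proof
      fix i assume i: "i \<in> Poly_Mapping.keys (m - Poly_Mapping.single j k)"
      then have "i \<noteq> j" using m by (auto simp: in_keys_iff lookup_minus)
      moreover have "i \<in> Poly_Mapping.keys m" using i by (auto simp: in_keys_iff lookup_minus lookup_single)
      ultimately show "i \<in> Y" using m g(1) unfolding polys_in_def by auto
    qed
  qed
  have "D \<in> ?L ` ?K" unfolding D_def using fin ne by (intro Max_in) auto
  then obtain m0 where m0: "m0 \<in> ?K" "?L m0 = D" by auto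
  have "Poly_Mapping.lookup (cf D) (m0 - Poly_Mapping.single j D)
      = (\<Sum>m\<in>?S D. if m = m0 then Poly_Mapping.lookup g m else 0)"
    unfolding cf_def lookup_sum
  proof (rule sum.cong[OF refl])
    fix m assume m: "m \<in> ?S D"
    have "m - Poly_Mapping.single j D = m0 - Poly_Mapping.single j D \<longleftrightarrow> m = m0"
    proof
      assume e: "m - Poly_Mapping.single j D = m0 - Poly_Mapping.single j D"
      have "m = m - Poly_Mapping.single j D + Poly_Mapping.single j D" using backeq[of m D] m by simp
      also have "\<dots> = m0 - Poly_Mapping.single j D + Poly_Mapping.single j D" using e by simp
      also have "\<dots> = m0" using backeq[of m0 D] m0 by simp
      finally show "m = m0" .
    qed simp
    then show "Poly_Mapping.lookup (Poly_Mapping.single (m - Poly_Mapping.single j D) (Poly_Mapping.lookup g m))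
          (m0 - Poly_Mapping.single j D) = (if m = m0 then Poly_Mapping.lookup g m else 0)"
      by (simp add: lookup_single when_def)
  qed
  also have "\<dots> = Poly_Mapping.lookup g m0" using m0 by (simp add: sum.delta')
  also have "\<dots> \<noteq> 0" using m0 by (simp add: in_keys_iff)
  finally have "cf D \<noteq> 0" by auto
  then show ?thesis using rep inY by blast
qed


lemma gi_subset: "subr R \<Longrightarrow> G \<subseteq> R \<Longrightarrow> gen_ideal R G \<subseteq> R"
  unfolding gen_ideal_def by (auto intro!: subr_sum subrD(4))

lemma KY_Z_locz: "KY_Z d n = locz (polys_in {0..<d} - {0}) (polys_in {0..<n})"
  unfolding KY_Z_def locz_def by blast

locale setting =
  fixes n d :: nat and H :: "'a::field mpoly set" and f :: "'a mpoly"
  assumes dn: "d \<le> n" and finH: "finite H" and HX: "H \<subseteq> polys_in {0..<n}"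
    and fX: "f \<in> polys_in {0..<n}"
begin

abbreviation "X \<equiv> polys_in {0..<n} :: 'a mpoly set"
abbreviation "Yp \<equiv> polys_in {0..<d} :: 'a mpoly set"
abbreviation "Dy \<equiv> Yp - {0}"
abbreviation "KY \<equiv> KY_Z d n :: 'a mpoly fract set"
abbreviation "I \<equiv> gen_ideal KY (emb ` H)"
abbreviation "J \<equiv> radical_in KY I"

lemma YX: "Yp \<subseteq> X" using dn by (intro polys_in_mono) auto

lemma mcl: "mclosed Dy X"
  unfolding mclosed_def using subr_polys_in YX subrD(2)[OF subr_polys_in]
  by (auto intro: subrD)

lemma mclY: "mclosed Dy Yp"
  unfolding mclosed_def using subr_polys_in subrD(2)[OF subr_polys_in]
  by (auto intro: subrD)

lemma subrKY: "subr KY" unfolding KY_Z_locz using subr_locz[OF mcl] .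

lemma embKY: "p \<in> X \<Longrightarrow> emb p \<in> KY" unfolding KY_Z_locz using locz_emb[OF mcl] .

lemma FractKY: "p \<in> X \<Longrightarrow> q \<in> Yp \<Longrightarrow> q \<noteq> 0 \<Longrightarrow> Fract p q \<in> KY"
  unfolding KY_Z_def by blast

lemma fKY: "emb f \<in> KY" using embKY fX .

lemma I_KY: "I \<subseteq> KY"
proof -
  have "emb ` H \<subseteq> KY" using embKY HX by auto
  then show ?thesis using gi_subset[OF subrKY] by blast
qed

lemma I_J: "x \<in> I \<Longrightarrow> x \<in> J"
  unfolding radical_in_def using I_KY by (auto intro!: exI[of _ 1])

lemma J_KY: "J \<subseteq> KY" unfolding radical_in_def by auto

lemma J_mult: "r \<in> KY \<Longrightarrow> x \<in> J \<Longrightarrow> r * x \<in> J"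
proof -
  assume r: "r \<in> KY" and x: "x \<in> J"
  then obtain m where "x ^ m \<in> I" "x \<in> KY" unfolding radical_in_def by auto
  then have "r ^ m * x ^ m \<in> I" using r by (intro gi_mult[OF subrKY] subr_power[OF subrKY])
  then show "r * x \<in> J" unfolding radical_in_def using r \<open>x \<in> KY\<close>
    by (auto simp: power_mult_distrib intro!: subrD(4)[OF subrKY])
qed

lemma I_addI: "x \<in> I \<Longrightarrow> y \<in> I \<Longrightarrow> x + y \<in> I" using gi_add[OF subrKY] .
lemma I_multI: "r \<in> KY \<Longrightarrow> x \<in> I \<Longrightarrow> r * x \<in> I" using gi_mult[OF subrKY] .

lemma I_emb: "y \<in> gen_ideal X H \<Longrightarrow> emb y \<in> I"
  unfolding KY_Z_locz using gi_emb_intro[OF mcl finH] .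

lemma I_clear: "x \<in> I \<Longrightarrow> \<exists>Q\<in>Dy. \<exists>y\<in>gen_ideal X H. emb Q * x = emb y"
  unfolding KY_Z_locz using gi_locz_clear[OF mcl finH] .

lemma KY_cases: "x \<in> KY \<Longrightarrow> (\<And>p q. x = Fract p q \<Longrightarrow> p \<in> X \<Longrightarrow> q \<in> Dy \<Longrightarrow> P) \<Longrightarrow> P"
  unfolding KY_Z_def by blast

lemma lemA:
  assumes "emb f \<in> J"
  shows "\<exists>Q. Q \<in> gen_ideal (polys_in {0..<Suc n}) (insert (f * Var n - 1) H) \<and> Q \<in> Yp \<and> Q \<noteq> 0"
proof -
  let ?X' = "polys_in {0..<Suc n} :: 'a mpoly set"
  obtain m where m: "emb f ^ m \<in> I" using assms unfolding radical_in_def by auto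
  obtain Q y where Qy: "Q \<in> Dy" "y \<in> gen_ideal X H" "emb Q * emb (f ^ m) = emb y"
    using I_clear[of "emb (f ^ m)"] m by (auto simp: emb_power)
  have Qfy: "Q * f ^ m = y" using Qy(3) by (simp del: emb_mult add: emb_mult[symmetric])
  have XX': "X \<subseteq> ?X'" by (intro polys_in_mono) auto
  define t where "t = (Var n :: 'a mpoly)"
  have tX': "t \<in> ?X'" unfolding t_def by (intro Var_in) auto
  have fX': "f \<in> ?X'" using fX XX' by auto
  have QX': "Q \<in> ?X'" using Qy(1) YX XX' by auto
  have "y \<in> gen_ideal ?X' H" using gi_mono_R[OF XX'] Qy(2) by auto
  then have y': "t ^ m * y \<in> gen_ideal ?X' H"
    by (intro gi_mult[OF subr_polys_in] subr_power[OF subr_polys_in] tX')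
  define c where "c = - Q * (\<Sum>i<m. (f * t) ^ i)"
  have cX': "c \<in> ?X'" unfolding c_def using QX' fX' tX'
    by (auto intro!: subr_uminus[OF subr_polys_in] subrD(4)[OF subr_polys_in] subr_sum[OF subr_polys_in]
      subr_power[OF subr_polys_in])
  have e: "(f * t) ^ m - 1 = (f * t - 1) * (\<Sum>i<m. (f * t) ^ i)" by (rule power_diff_1_eq)
  have "t ^ m * y + c * (f * t - 1) = Q * (f * t) ^ m - Q * ((f * t - 1) * (\<Sum>i<m. (f * t) ^ i))"
    unfolding c_def Qfy[symmetric] by (simp add: algebra_simps power_mult_distrib)
  also have "\<dots> = Q" unfolding e[symmetric] by (simp add: algebra_simps)
  finally have "t ^ m * y + c * (f * t - 1) = Q" .
  moreover have "t ^ m * y + c * (f * t - 1) \<in> gen_ideal ?X' (insert (f * t - 1) H)"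
    by (rule gi_insertI[OF subr_polys_in finH y' cX'])
  ultimately have "Q \<in> gen_ideal ?X' (insert (f * Var n - 1) H)" unfolding t_def by simp
  then show ?thesis using Qy(1) by auto
qed

lemma lemB:
  assumes u: "u \<in> KY" and J1: "1 - emb f * u \<in> J"
  shows "\<exists>Q. Q \<in> gen_ideal X (insert f H) \<and> Q \<in> Yp \<and> Q \<noteq> 0"
proof -
  obtain m where m: "(1 - emb f * u) ^ m \<in> I" using J1 unfolding radical_in_def by auto
  define s where "s = u * (\<Sum>i<m. (1 - emb f * u) ^ i)"
  have sKY: "s \<in> KY" unfolding s_def using u fKY
    by (auto intro!: subrD[OF subrKY] subr_sum[OF subrKY] subr_power[OF subrKY])
  have one: "1 = (1 - emb f * u) ^ m + emb f * s"
    unfolding s_def using power_diff_1_eq[of "1 - emb f * u" m] by (simp add: algebra_simps)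
  obtain Q1 y where Qy: "Q1 \<in> Dy" "y \<in> gen_ideal X H" "emb Q1 * (1 - emb f * u) ^ m = emb y"
    using I_clear m by blast
  obtain p2 q2 where pq: "s = Fract p2 q2" "p2 \<in> X" "q2 \<in> Dy" using sKY KY_cases by metis
  have q2s: "emb q2 * s = emb p2" using pq by (simp add: emb_def eq_fract)
  have "emb (Q1 * q2) = emb q2 * (emb Q1 * (1 - emb f * u) ^ m) + emb Q1 * emb f * (emb q2 * s)"
    using arg_cong[OF one, of "\<lambda>z. emb Q1 * emb q2 * z"] by (simp add: algebra_simps)
  also have "\<dots> = emb (q2 * y + (Q1 * p2) * f)" using Qy(3) q2s by simp
  finally have eq: "Q1 * q2 = q2 * y + (Q1 * p2) * f" by (simp only: emb_inject)
  have "q2 * y \<in> gen_ideal X H" using Qy(2) pq(3) YX by (intro gi_mult[OF subr_polys_in]) auto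
  moreover have "Q1 * p2 \<in> X" using Qy(1) pq(2) YX by (auto intro: subrD[OF subr_polys_in])
  ultimately have "Q1 * q2 \<in> gen_ideal X (insert f H)"
    unfolding eq using gi_insertI[OF subr_polys_in finH] by blast
  moreover have "Q1 * q2 \<in> Yp" "Q1 * q2 \<noteq> 0" using Qy(1) pq(3) by (auto intro: subrD[OF subr_polys_in])
  ultimately show ?thesis by blast
qed

lemma lemC:
  assumes Q: "Q \<in> gen_ideal X (insert f H)" "Q \<in> Yp" "Q \<noteq> 0"
  shows "\<exists>u\<in>KY. 1 - emb f * u \<in> I"
proof -
  obtain c y where cy: "c \<in> X" "y \<in> gen_ideal X H" "Q = c * f + y"
    using gi_insertE[OF subr_polys_in finH Q(1)] by blast
  have u: "Fract c Q \<in> KY" using FractKY cy(1) Q by auto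
  have iQ: "Fract 1 Q \<in> KY" using FractKY Q subrD(2)[OF subr_polys_in] by auto
  have "1 - emb f * Fract c Q = Fract 1 Q * emb y"
  proof -
    have q0: "emb Q \<noteq> 0" using Q by simp
    have eq: "Fract c Q = emb c * inverse (emb Q)" "Fract 1 Q = inverse (emb Q)"
      by (simp_all add: Fract_eq_emb_mult)
    have eQ: "emb Q = emb c * emb f + emb y" using cy(3) by simp
    have "1 - emb f * Fract c Q = (emb Q - emb f * emb c) * inverse (emb Q)"
      unfolding eq using q0 by (simp add: algebra_simps)
    also have "\<dots> = Fract 1 Q * emb y" unfolding eq eQ by (simp add: algebra_simps)
    finally show ?thesis .
  qed
  also have "\<dots> \<in> I" using iQ I_emb[OF cy(2)] by (rule I_multI)
  finally show ?thesis using u by blast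
qed

lemma J_zero_div_impossible:
  assumes u: "u \<in> KY" "1 - emb f * u \<in> I" and b: "b \<in> KY" "emb f * b \<in> J"
  shows "b \<in> J"
proof -
  obtain m where m: "(emb f * b) ^ m \<in> I" using b(2) unfolding radical_in_def by auto
  have "b ^ m = b ^ m * (1 - (emb f * u) ^ m) + u ^ m * (emb f * b) ^ m"
    by (simp add: algebra_simps power_mult_distrib)
  also have "1 - (emb f * u) ^ m = (1 - emb f * u) * (\<Sum>i<m. (emb f * u) ^ i)"
    using power_diff_1_eq[of "emb f * u" m] by (simp add: algebra_simps)
  also have "b ^ m * \<dots> = (b ^ m * (\<Sum>i<m. (emb f * u) ^ i)) * (1 - emb f * u)"
    by (simp add: algebra_simps)
  finally have "b ^ m = (b ^ m * (\<Sum>i<m. (emb f * u) ^ i)) * (1 - emb f * u) + u ^ m * (emb f * b) ^ m" .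
  moreover have "(b ^ m * (\<Sum>i<m. (emb f * u) ^ i)) \<in> KY" using b u fKY
    by (auto intro!: subrD(4)[OF subrKY] subr_sum[OF subrKY] subr_power[OF subrKY])
  ultimately have "b ^ m \<in> I" using u m
    by (metis I_addI I_multI subr_power[OF subrKY])
  then show ?thesis using b(1) unfolding radical_in_def by auto
qed

end


context setting
begin

lemma zero_J: "0 \<in> J"
  unfolding radical_in_def using subrD(1)[OF subrKY] gi_0[OF subrKY] by (auto intro!: exI[of _ 1])

text \<open>Lemma D: the Rabinowitsch direction, via evaluation at t = 1/f.\<close>
lemma lemD:
  assumes Q: "Q \<in> gen_ideal (polys_in {0..<Suc n}) (insert (f * Var n - 1) H)" "Q \<in> Yp" "Q \<noteq> 0"
  shows "emb f \<in> J"
proof (cases "f = 0")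
  case True then show ?thesis using zero_J by simp
next
  case f0: False
  let ?X' = "polys_in {0..<Suc n} :: 'a mpoly set"
  obtain c y where cy: "c \<in> ?X'" "y \<in> gen_ideal ?X' H" "Q = c * (f * Var n - 1) + y"
    using gi_insertE[OF subr_polys_in finH Q(1)] by blast
  obtain cg where cg: "\<forall>g\<in>H. cg g \<in> ?X'" "y = (\<Sum>g\<in>H. cg g * g)"
    using cy(2) unfolding gen_ideal_def by auto
  define \<phi> where "\<phi> i = (if i = n then inverse (emb f) else emb (Var i))" for i
  have evX: "ev \<phi> p = emb p" if "p \<in> X" for p
  proof -
    have "ev \<phi> p = ev (\<lambda>i. emb (Var i)) p"
      by (rule ev_cong[OF _ that]) (auto simp: \<phi>_def)
    then show ?thesis by (simp add: ev_emb)
  qed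
  have "ev \<phi> (f * Var n - 1) = 0"
    using f0 by (simp add: ev_diff ev_mult evX[OF fX] \<phi>_def)
  moreover have "ev \<phi> Q = emb Q" using evX Q(2) YX by auto
  ultimately have eQ: "emb Q = (\<Sum>g\<in>H. ev \<phi> (cg g) * emb g)"
    unfolding cy(3) cg(2) using HX by (simp add: ev_add ev_mult ev_sum evX subset_iff)
  define Df where "Df = range (\<lambda>k. f ^ k)"
  have mf: "mclosed Df X" unfolding mclosed_def Df_def
    using subr_polys_in f0 fX subr_power[OF subr_polys_in]
    by (auto simp: power_add[symmetric] intro: range_eqI[of _ _ 0])
  have inT: "ev \<phi> (cg g) \<in> locz Df X" if g: "g \<in> H" for g
  proof (rule ev_in[OF subr_locz[OF mf] _ _ cg(1)[rule_format, OF g]])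
    show "emb (Poly_Mapping.single 0 c) \<in> locz Df X" for c
      by (intro locz_emb[OF mf] single_in) simp
    show "\<phi> i \<in> locz Df X" if "i \<in> {0..<Suc n}" for i
    proof (cases "i = n")
      case True
      have "\<phi> i = Fract 1 (f ^ 1)" using True by (simp add: \<phi>_def emb_def)
      then show ?thesis unfolding locz_def Df_def using subrD(2)[OF subr_polys_in] by blast
    next
      case False
      then show ?thesis using that by (auto simp: \<phi>_def intro!: locz_emb[OF mf] Var_in)
    qed
  qed
  have "emb Q \<in> gen_ideal (locz Df X) (emb ` H)"
    unfolding gi_emb_sum[OF finH] eQ using inT by (intro exI[of _ "\<lambda>g. ev \<phi> (cg g)"] conjI ballI refl)
  then obtain P z where Pz: "P \<in> Df" "z \<in> gen_ideal X H" "emb P * emb Q = emb z"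
    using gi_locz_clear[OF mf finH] by blast
  obtain k where k: "P = f ^ k" using Pz(1) unfolding Df_def by auto
  have "emb f ^ k = Fract 1 Q * emb z"
    using Pz(3) Q(3) by (simp add: k emb_power Fract_eq_emb_mult field_simps)
  also have "\<dots> \<in> I" using FractKY Q(2,3) subrD(2)[OF subr_polys_in] I_emb[OF Pz(2)]
    by (intro I_multI) auto
  finally show ?thesis unfolding radical_in_def using fKY by auto
qed

end


context setting
begin

abbreviation "F \<equiv> KY_Z d d :: 'a mpoly fract set"

lemma F_locz: "F = locz Dy Yp" using KY_Z_locz[of d d] .

lemma subrF: "subr F" unfolding F_locz using subr_locz[OF mclY] .

lemma F_KY: "F \<subseteq> KY" unfolding KY_Z_def using YX by blast

lemma Finv: "x \<in> F \<Longrightarrow> inverse x \<in> F"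
proof -
  assume "x \<in> F"
  then obtain p q where pq: "x = Fract p q" "p \<in> Yp" "q \<in> Dy" unfolding KY_Z_def by blast
  show "inverse x \<in> F"
  proof (cases "p = 0")
    case True
    then have "inverse x = 0" using pq by (simp add: eq_fract(2) fract_collapse)
    then show ?thesis using subrD(1)[OF subrF] by simp
  next
    case False
    then show ?thesis using pq unfolding KY_Z_def by auto
  qed
qed

lemma embF: "p \<in> Yp \<Longrightarrow> emb p \<in> F" unfolding F_locz using locz_emb[OF mclY] .

lemma reduction:
  assumes indep: "max_indep_vars n (gen_ideal X H) {0..<d}" and j: "j \<in> {d..<n}"
  shows "\<exists>D A. 0 < D \<and> (\<forall>k. A k \<in> F) \<and>
    emb (Var j) ^ D - (\<Sum>k<D. A k * emb (Var j) ^ k) \<in> I"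
proof -
  let ?W = "insert j {0..<d}"
  have "?W \<subseteq> {0..<n}" "card ?W > card {0..<d}" using j dn by auto
  then have "gen_ideal X H \<inter> polys_in ?W \<noteq> {0}" using indep unfolding max_indep_vars_def by blast
  moreover have "0 \<in> gen_ideal X H \<inter> polys_in ?W" using gi_0[OF subr_polys_in] subrD(1)[OF subr_polys_in] by blast
  ultimately obtain g where g: "g \<in> gen_ideal X H" "g \<in> polys_in ?W" "g \<noteq> 0" by blast
  obtain D cf where Dcf: "\<forall>k. cf k \<in> Yp" "cf D \<noteq> 0" "g = (\<Sum>k\<le>D. cf k * Var j ^ k)"
    using decomp[OF g(2,3)] by blast
  have Y0: "gen_ideal X H \<inter> Yp = {0}" using indep unfolding max_indep_vars_def by blast
  have D0: "0 < D"
  proof (rule ccontr)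
    assume "\<not> 0 < D"
    then have "g = cf 0" using Dcf(3) by simp
    then have "g \<in> gen_ideal X H \<inter> Yp" using g(1) Dcf(1) by auto
    then show False using Y0 g(3) by blast
  qed
  let ?z = "emb (Var j) :: 'a mpoly fract"
  let ?c = "\<lambda>k. emb (cf k)"
  define A where "A k = - Fract (cf k) (cf D)" for k
  have AF: "A k \<in> F" for k
    unfolding A_def minus_fract KY_Z_def using Dcf(1,2) subr_uminus[OF subr_polys_in] by blast
  have cD: "?c D \<noteq> 0" using Dcf(2) by simp
  have A_eq: "A k = - ?c k * inverse (?c D)" for k unfolding A_def by (simp add: Fract_eq_emb_mult)
  have eg: "emb g = ?c D * ?z ^ D + (\<Sum>k<D. ?c k * ?z ^ k)"
    unfolding Dcf(3) emb_sum lessThan_Suc_atMost[symmetric]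
    by (simp add: emb_power)
  have "?z ^ D - (\<Sum>k<D. A k * ?z ^ k) = inverse (?c D) * emb g"
    unfolding eg A_eq using cD
    by (simp add: algebra_simps sum_distrib_left sum_negf)
  also have "\<dots> = Fract 1 (cf D) * emb g" by (simp add: Fract_eq_emb_mult)
  also have "\<dots> \<in> I" using FractKY[of 1 "cf D"] Dcf(1,2) subrD(2)[OF subr_polys_in] I_emb[OF g(1)]
    by (intro I_multI) auto
  finally show ?thesis using D0 AF by blast
qed

end


context setting
begin

lemma lemE:
  assumes indep: "max_indep_vars n (gen_ideal X H) {0..<d}"
  shows "\<exists>N c. (\<forall>i\<le>N. c i \<in> F) \<and> (\<exists>i\<le>N. c i \<noteq> 0) \<and> (\<Sum>i\<le>N. c i * emb f ^ i) \<in> I"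
proof -
  define Z where "Z = {d..<n}"
  define z where "z j = emb (Var j :: 'a mpoly)" for j
  have zKY: "z j \<in> KY" if "j < n" for j unfolding z_def using that by (intro embKY Var_in) auto
  have "\<forall>j\<in>Z. \<exists>p. 0 < fst p \<and> (\<forall>k. snd p k \<in> F) \<and>
      z j ^ fst p - (\<Sum>k<fst p. snd p k * z j ^ k) \<in> I"
  proof
    fix j assume "j \<in> Z"
    then obtain D A where "0 < D" "\<forall>k. A k \<in> F" "emb (Var j) ^ D - (\<Sum>k<D. A k * emb (Var j) ^ k) \<in> I"
      using reduction[OF indep] unfolding Z_def by blast
    then show "\<exists>p. 0 < fst p \<and> (\<forall>k. snd p k \<in> F) \<and> z j ^ fst p - (\<Sum>k<fst p. snd p k * z j ^ k) \<in> I"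
      unfolding z_def by (intro exI[of _ "(D, A)"]) simp
  qed
  then have "\<exists>pp. \<forall>j\<in>Z. 0 < fst (pp j) \<and> (\<forall>k. snd (pp j) k \<in> F) \<and>
      z j ^ fst (pp j) - (\<Sum>k<fst (pp j). snd (pp j) k * z j ^ k) \<in> I"
    by (rule bchoice)
  then obtain pp where pp: "\<forall>j\<in>Z. 0 < fst (pp j) \<and> (\<forall>k. snd (pp j) k \<in> F) \<and>
      z j ^ fst (pp j) - (\<Sum>k<fst (pp j). snd (pp j) k * z j ^ k) \<in> I" ..
  define Dg where "Dg j = fst (pp j)" for j
  define Ag where "Ag j = snd (pp j)" for j
  have Dg0: "j \<in> Z \<Longrightarrow> 0 < Dg j" for j using pp Dg_def by auto
  have AgF: "j \<in> Z \<Longrightarrow> Ag j k \<in> F" for j k using pp Ag_def by auto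
  have red: "j \<in> Z \<Longrightarrow> z j ^ Dg j - (\<Sum>k<Dg j. Ag j k * z j ^ k) \<in> I" for j
    using pp Dg_def Ag_def by auto
  define PE where "PE = PiE Z (\<lambda>j. {..<Dg j})"
  define mon where "mon e = (\<Prod>j\<in>Z. z j ^ e j)" for e
  define B where "B = mon ` PE"
  have finZ: "finite Z" unfolding Z_def by simp
  have finB: "finite B" unfolding B_def PE_def using finZ by (intro finite_imageI finite_PiE) auto
  have monKY: "mon e \<in> KY" for e unfolding mon_def
    using zKY by (intro subr_prod[OF subrKY] subr_power[OF subrKY]) (auto simp: Z_def)
  have BKY: "B \<subseteq> KY" unfolding B_def using monKY by auto
  have FKY: "r \<in> F \<Longrightarrow> r \<in> KY" for r using F_KY by auto
  define S where "S = {x \<in> KY. \<exists>a. (\<forall>b\<in>B. a b \<in> F) \<and> x - (\<Sum>b\<in>B. a b * b) \<in> I}"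
  have s4: "x \<in> S" if h: "x \<in> KY" "y \<in> S" "x - y \<in> I" for x y
  proof -
    obtain a where a: "\<forall>b\<in>B. a b \<in> F" "y - (\<Sum>b\<in>B. a b * b) \<in> I" using h(2) unfolding S_def by auto
    have "x - (\<Sum>b\<in>B. a b * b) = (x - y) + (y - (\<Sum>b\<in>B. a b * b))" by simp
    also have "\<dots> \<in> I" using h(3) a(2) by (rule I_addI)
    finally show ?thesis unfolding S_def using h(1) a(1) by blast
  qed
  have s2: "x + y \<in> S" if h: "x \<in> S" "y \<in> S" for x y
  proof -
    obtain a where a: "\<forall>b\<in>B. a b \<in> F" "x - (\<Sum>b\<in>B. a b * b) \<in> I" "x \<in> KY" using h(1) unfolding S_def by auto
    obtain a' where a': "\<forall>b\<in>B. a' b \<in> F" "y - (\<Sum>b\<in>B. a' b * b) \<in> I" "y \<in> KY" using h(2) unfolding S_def by auto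
    have "x + y - (\<Sum>b\<in>B. (a b + a' b) * b) = (x - (\<Sum>b\<in>B. a b * b)) + (y - (\<Sum>b\<in>B. a' b * b))"
      by (simp add: algebra_simps sum.distrib)
    also have "\<dots> \<in> I" using a(2) a'(2) by (rule I_addI)
    finally show ?thesis unfolding S_def using a a' subrD(3)[OF subrKY] subrD(3)[OF subrF]
      by (intro CollectI conjI exI[of _ "\<lambda>b. a b + a' b"]) auto
  qed
  have s3: "r * x \<in> S" if h: "r \<in> F" "x \<in> S" for r x
  proof -
    obtain a where a: "\<forall>b\<in>B. a b \<in> F" "x - (\<Sum>b\<in>B. a b * b) \<in> I" "x \<in> KY" using h(2) unfolding S_def by auto
    have "r * x - (\<Sum>b\<in>B. (r * a b) * b) = r * (x - (\<Sum>b\<in>B. a b * b))"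
      by (simp add: algebra_simps sum_distrib_left)
    also have "\<dots> \<in> I" using FKY[OF h(1)] a(2) by (rule I_multI)
    finally show ?thesis unfolding S_def using a h(1) subrD(4)[OF subrKY] subrD(4)[OF subrF] FKY
      by (intro CollectI conjI exI[of _ "\<lambda>b. r * a b"]) auto
  qed
  have s0: "0 \<in> S" unfolding S_def using subrD(1)[OF subrKY] subrD(1)[OF subrF] gi_0[OF subrKY]
    by (intro CollectI conjI exI[of _ "\<lambda>b. 0"]) auto
  have s1: "b0 \<in> S" if "b0 \<in> B" for b0
  proof -
    have "(\<Sum>b\<in>B. (if b = b0 then 1 else 0) * b) = (\<Sum>b\<in>B. if b = b0 then b else 0)"
      by (rule sum.cong) auto
    also have "\<dots> = b0" using that finB by (simp add: sum.delta')
    finally show ?thesis unfolding S_def using that BKY subrD(1,2)[OF subrF] gi_0[OF subrKY]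
      by (intro CollectI conjI exI[of _ "\<lambda>b. if b = b0 then 1 else 0"]) auto
  qed
  have ssum: "(\<And>l. l \<in> L \<Longrightarrow> y l \<in> S) \<Longrightarrow> sum y L \<in> S" for L y
    by (induction L rule: infinite_finite_induct) (auto intro: s0 s2)
  have monupd: "mon (e(j := k)) = z j ^ k * (\<Prod>i\<in>Z - {j}. z i ^ e i)" if "j \<in> Z" for e j k
    unfolding mon_def using that finZ by (simp add: prod.remove)
  have updPE: "e(j := k) \<in> PE" if "e \<in> PE" "j \<in> Z" "k < Dg j" for e j k
    using that unfolding PE_def by (auto simp: PiE_iff extensional_def)
  have zmul: "z j * mon e \<in> S" if j: "j \<in> Z" and e: "e \<in> PE" for j e
  proof -
    let ?R = "\<Prod>i\<in>Z - {j}. z i ^ e i"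
    have RKY: "?R \<in> KY" using zKY by (intro subr_prod[OF subrKY] subr_power[OF subrKY]) (auto simp: Z_def)
    have me: "mon e = z j ^ e j * ?R" using monupd[OF j, of e "e j"] by simp
    have ej: "e j < Dg j" using e j unfolding PE_def by auto
    show ?thesis
    proof (cases "Suc (e j) < Dg j")
      case True
      have "z j * mon e = mon (e(j := Suc (e j)))" unfolding me monupd[OF j] by simp
      moreover have "mon (e(j := Suc (e j))) \<in> B" unfolding B_def using updPE[OF e j True] by blast
      ultimately show ?thesis using s1 by simp
    next
      case False
      then have DS: "Dg j = Suc (e j)" using ej by simp
      define y where "y = (\<Sum>k<Dg j. Ag j k * mon (e(j := k)))"
      have yS: "y \<in> S" unfolding y_def
        by (intro ssum s3 AgF[OF j] s1) (use updPE[OF e j] in \<open>auto simp: B_def\<close>)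
      have "z j * mon e - y = ?R * (z j ^ Dg j - (\<Sum>k<Dg j. Ag j k * z j ^ k))"
        unfolding y_def me monupd[OF j] DS by (simp add: algebra_simps sum_distrib_left)
      also have "\<dots> \<in> I" using RKY red[OF j] by (rule I_multI)
      finally show ?thesis using s4 yS subrD(4)[OF subrKY zKY monKY] j unfolding Z_def by auto
    qed
  qed
  have zS: "z j * x \<in> S" if j: "j \<in> Z" and x: "x \<in> S" for j x
  proof -
    obtain a where a: "\<forall>b\<in>B. a b \<in> F" "x - (\<Sum>b\<in>B. a b * b) \<in> I" "x \<in> KY" using x unfolding S_def by auto
    have yS: "(\<Sum>b\<in>B. a b * (z j * b)) \<in> S"
      by (intro ssum, rule s3) (use a(1) zmul[OF j] in \<open>auto simp: B_def\<close>)
    have "z j * x - (\<Sum>b\<in>B. a b * (z j * b)) = z j * (x - (\<Sum>b\<in>B. a b * b))"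
      by (simp add: algebra_simps sum_distrib_left)
    also have "\<dots> \<in> I" using zKY j a(2) unfolding Z_def by (intro I_multI) auto
    finally show ?thesis using s4 yS subrD(4)[OF subrKY zKY a(3)] j unfolding Z_def by auto
  qed
  define T where "T = {r \<in> KY. \<forall>x\<in>S. r * x \<in> S}"
  have m1F: "-1 \<in> F" using subr_uminus[OF subrF subrD(2)[OF subrF]] .
  have subrT: "subr T" unfolding subr_def T_def
  proof (intro conjI ballI; (elim CollectE conjE)?)
    show "0 \<in> {r \<in> KY. \<forall>x\<in>S. r * x \<in> S}" using subrD(1)[OF subrKY] s0 by auto
    show "1 \<in> {r \<in> KY. \<forall>x\<in>S. r * x \<in> S}" using subrD(2)[OF subrKY] by auto
  next
    fix r r'
    assume r: "r \<in> KY" "\<forall>x\<in>S. r * x \<in> S" and r': "r' \<in> KY" "\<forall>x\<in>S. r' * x \<in> S"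
    show "r + r' \<in> {r \<in> KY. \<forall>x\<in>S. r * x \<in> S}"
      using r r' subrD(3)[OF subrKY] s2 by (auto simp: distrib_right)
    show "r * r' \<in> {r \<in> KY. \<forall>x\<in>S. r * x \<in> S}"
      using r r' subrD(4)[OF subrKY] by (auto simp: mult.assoc)
    have "(r - r') * x \<in> S" if x: "x \<in> S" for x
    proof -
      have "(r - r') * x = r * x + (-1) * (r' * x)" by (simp add: algebra_simps)
      moreover have "r * x + (-1) * (r' * x) \<in> S" using r(2) r'(2) x by (intro s2 s3[OF m1F]) auto
      ultimately show ?thesis by simp
    qed
    then show "r - r' \<in> {r \<in> KY. \<forall>x\<in>S. r * x \<in> S}"
      using r r' subrD(5)[OF subrKY] by auto
  qed
  have FT: "r \<in> F \<Longrightarrow> r \<in> T" for r unfolding T_def using FKY s3 by auto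
  have fT: "emb f \<in> T"
  proof -
    have "ev (\<lambda>i. emb (Var i)) f \<in> T"
    proof (rule ev_in[OF subrT _ _ fX])
      show "emb (Poly_Mapping.single 0 c) \<in> T" for c by (intro FT embF single_in) simp
      show "emb (Var i) \<in> T" if "i \<in> {0..<n}" for i
      proof (cases "i < d")
        case True then show ?thesis by (intro FT embF Var_in) auto
      next
        case False
        then have "i \<in> Z" using that unfolding Z_def by auto
        then show ?thesis unfolding T_def using zS zKY unfolding z_def Z_def by auto
      qed
    qed
    then show ?thesis by (simp add: ev_emb)
  qed
  have oneS: "1 \<in> S"
  proof -
    have "restrict (\<lambda>_. 0) Z \<in> PE" unfolding PE_def using Dg0 by auto
    moreover have "mon (restrict (\<lambda>_. 0) Z) = 1" unfolding mon_def by simp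
    ultimately show ?thesis using s1 unfolding B_def by (metis image_eqI)
  qed
  have powS: "emb f ^ i \<in> S" for i
    using subr_power[OF subrT fT, of i] oneS unfolding T_def by force
  have "\<forall>i\<in>{..card B}. \<exists>a. (\<forall>b\<in>B. a b \<in> F) \<and> emb f ^ i - (\<Sum>b\<in>B. a b * b) \<in> I"
    using powS unfolding S_def by blast
  then have "\<exists>a. \<forall>i\<in>{..card B}. (\<forall>b\<in>B. a i b \<in> F) \<and> emb f ^ i - (\<Sum>b\<in>B. a i b * b) \<in> I"
    by (rule bchoice)
  then obtain a where a: "\<forall>i\<in>{..card B}. (\<forall>b\<in>B. a i b \<in> F) \<and> emb f ^ i - (\<Sum>b\<in>B. a i b * b) \<in> I" ..
  have "\<exists>c. (\<forall>i\<in>{..card B}. c i \<in> F) \<and> (\<exists>i\<in>{..card B}. c i \<noteq> 0) \<and> (\<Sum>i\<in>{..card B}. c i * emb f ^ i) \<in> I"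
    by (rule lin_dep[OF subrF Finv gi_0[OF subrKY] I_addI I_multI[OF FKY] finB])
      (use a in auto)
  then show ?thesis by (intro exI[of _ "card B"]) auto
qed

end


context setting
begin

lemma zero_only: "0 \<in> A \<Longrightarrow> (A \<inter> Yp = {0}) \<longleftrightarrow> \<not> (\<exists>Q. Q \<in> A \<and> Q \<in> Yp \<and> Q \<noteq> 0)"
  using subrD(1)[OF subr_polys_in, of "{0..<d}"] by blast

lemma main_iff:
  assumes indep: "max_indep_vars n (gen_ideal X H) {0..<d}"
  shows "(gen_ideal (polys_in {0..<Suc n}) (insert (f * Var n - 1) H) \<inter> Yp = {0}
          \<and> gen_ideal X (insert f H) \<inter> Yp = {0})
     \<longleftrightarrow> nonzero_zero_divisor_mod KY J (emb f)"
proof -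
  let ?A1 = "gen_ideal (polys_in {0..<Suc n}) (insert (f * Var n - 1) H)"
  let ?A2 = "gen_ideal X (insert f H)"
  have z1: "?A1 \<inter> Yp = {0} \<longleftrightarrow> \<not> (\<exists>Q. Q \<in> ?A1 \<and> Q \<in> Yp \<and> Q \<noteq> 0)"
    by (rule zero_only) (rule gi_0[OF subr_polys_in])
  have z2: "?A2 \<inter> Yp = {0} \<longleftrightarrow> \<not> (\<exists>Q. Q \<in> ?A2 \<and> Q \<in> Yp \<and> Q \<noteq> 0)"
    by (rule zero_only) (rule gi_0[OF subr_polys_in])
  let ?x = "emb f"
  show ?thesis unfolding z1 z2
  proof
    assume "\<not> (\<exists>Q. Q \<in> ?A1 \<and> Q \<in> Yp \<and> Q \<noteq> 0) \<and> \<not> (\<exists>Q. Q \<in> ?A2 \<and> Q \<in> Yp \<and> Q \<noteq> 0)"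
    then have c1: "\<not> (\<exists>Q. Q \<in> ?A1 \<and> Q \<in> Yp \<and> Q \<noteq> 0)" and c2: "\<not> (\<exists>Q. Q \<in> ?A2 \<and> Q \<in> Yp \<and> Q \<noteq> 0)"
      by auto
    have nJ: "?x \<notin> J" using lemA c1 by blast
    obtain N c where Nc: "\<forall>i\<le>N. c i \<in> F" "\<exists>i\<le>N. c i \<noteq> 0" "(\<Sum>i\<le>N. c i * ?x ^ i) \<in> I"
      using lemE[OF indep] by blast
    define i0 where "i0 = (LEAST i. c i \<noteq> 0)"
    obtain i1 where i1: "i1 \<le> N" "c i1 \<noteq> 0" using Nc(2) by auto
    have ci0: "c i0 \<noteq> 0" unfolding i0_def using i1(2) by (rule LeastI)
    have i0N: "i0 \<le> N" unfolding i0_def using i1 Least_le[of "\<lambda>i. c i \<noteq> 0" i1] by simp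
    have below: "i < i0 \<Longrightarrow> c i = 0" for i unfolding i0_def using not_less_Least by blast
    have cKY: "i \<le> N \<Longrightarrow> c i \<in> KY" for i using Nc(1) F_KY by auto
    define q where "q = (\<Sum>i\<in>{i0..N}. c i * ?x ^ (i - i0))"
    define g where "g = (\<Sum>i\<in>{Suc i0..N}. c i * ?x ^ (i - Suc i0))"
    have qKY: "q \<in> KY" unfolding q_def using cKY fKY
      by (intro subr_sum[OF subrKY] subrD(4)[OF subrKY] subr_power[OF subrKY]) auto
    have gKY: "g \<in> KY" unfolding g_def using cKY fKY
      by (intro subr_sum[OF subrKY] subrD(4)[OF subrKY] subr_power[OF subrKY]) auto
    have eq1: "(\<Sum>i\<le>N. c i * ?x ^ i) = ?x ^ i0 * q"
    proof -
      have "{..N} = {..<i0} \<union> {i0..N}" using i0N by auto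
      then have "(\<Sum>i\<le>N. c i * ?x ^ i) = (\<Sum>i<i0. c i * ?x ^ i) + (\<Sum>i\<in>{i0..N}. c i * ?x ^ i)"
        by (simp add: sum.union_disjoint ivl_disj_int)
      also have "(\<Sum>i<i0. c i * ?x ^ i) = 0" using below by simp
      also have "(\<Sum>i\<in>{i0..N}. c i * ?x ^ i) = (\<Sum>i\<in>{i0..N}. ?x ^ i0 * (c i * ?x ^ (i - i0)))"
      proof (rule sum.cong[OF refl])
        fix i assume "i \<in> {i0..N}"
        then have "i = i0 + (i - i0)" by auto
        then have "?x ^ i = ?x ^ i0 * ?x ^ (i - i0)" by (metis power_add)
        then show "c i * ?x ^ i = ?x ^ i0 * (c i * ?x ^ (i - i0))" by (simp add: ac_simps)
      qed
      finally show ?thesis unfolding q_def by (simp add: sum_distrib_left)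
    qed
    have eq2: "q = c i0 + ?x * g"
    proof -
      have "{i0..N} = insert i0 {Suc i0..N}" using i0N by auto
      then have "q = c i0 + (\<Sum>i\<in>{Suc i0..N}. c i * ?x ^ (i - i0))" unfolding q_def by simp
      also have "(\<Sum>i\<in>{Suc i0..N}. c i * ?x ^ (i - i0)) = ?x * g" unfolding g_def sum_distrib_left
      proof (rule sum.cong[OF refl])
        fix i assume "i \<in> {Suc i0..N}"
        then have "i - i0 = Suc (i - Suc i0)" by auto
        then show "c i * ?x ^ (i - i0) = ?x * (c i * ?x ^ (i - Suc i0))" by (simp add: ac_simps)
      qed
      finally show ?thesis .
    qed
    show "nonzero_zero_divisor_mod KY J ?x"
    proof (cases "q \<in> J")
      case True
      have ci0F: "c i0 \<in> F" using Nc(1) i0N by auto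
      have invKY: "inverse (c i0) \<in> KY" using Finv[OF ci0F] F_KY by auto
      define u where "u = - g * inverse (c i0)"
      have uKY: "u \<in> KY" unfolding u_def using gKY invKY
        by (intro subrD(4)[OF subrKY] subr_uminus[OF subrKY]) auto
      have "1 - ?x * u = inverse (c i0) * q"
        unfolding u_def eq2 using ci0 by (simp add: field_simps)
      also have "\<dots> \<in> J" using invKY True by (rule J_mult)
      finally show ?thesis using lemB[OF uKY] c2 by blast
    next
      case False
      have "i0 \<noteq> 0"
      proof
        assume "i0 = 0"
        then have "q \<in> I" using Nc(3) eq1 by simp
        then show False using False I_J by blast
      qed
      then obtain k where k: "i0 = Suc k" by (cases i0) auto
      have "(?x * q) ^ i0 = q ^ k * (?x ^ i0 * q)" unfolding k by (simp add: power_mult_distrib ac_simps)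
      also have "\<dots> \<in> I" using Nc(3) eq1 by (intro I_multI[OF subr_power[OF subrKY qKY]]) auto
      finally have "?x * q \<in> J" unfolding radical_in_def using fKY qKY subrD(4)[OF subrKY] by blast
      then show ?thesis unfolding nonzero_zero_divisor_mod_def using fKY nJ qKY False by blast
    qed
  next
    assume nzd: "nonzero_zero_divisor_mod KY J ?x"
    then obtain b where b: "?x \<notin> J" "b \<in> KY" "b \<notin> J" "?x * b \<in> J"
      unfolding nonzero_zero_divisor_mod_def by blast
    have "\<not> (\<exists>Q. Q \<in> ?A1 \<and> Q \<in> Yp \<and> Q \<noteq> 0)" using lemD b(1) by blast
    moreover have "\<not> (\<exists>Q. Q \<in> ?A2 \<and> Q \<in> Yp \<and> Q \<noteq> 0)"
    proof
      assume "\<exists>Q. Q \<in> ?A2 \<and> Q \<in> Yp \<and> Q \<noteq> 0"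
      then obtain u where "u \<in> KY" "1 - ?x * u \<in> I" using lemC by blast
      then show False using J_zero_div_impossible b by blast
    qed
    ultimately show "\<not> (\<exists>Q. Q \<in> ?A1 \<and> Q \<in> Yp \<and> Q \<noteq> 0) \<and> \<not> (\<exists>Q. Q \<in> ?A2 \<and> Q \<in> Yp \<and> Q \<noteq> 0)" by blast
  qed
qed

end

theorem theorem3:
  fixes n d :: nat and hs :: "('a::field) mpoly list" and f :: "'a mpoly"
  assumes "set hs \<subseteq> polys_in {0..<n}"
    and "f \<in> polys_in {0..<n}"
    and "d \<le> n"
    and "max_indep_vars n (gen_ideal (polys_in {0..<n}) (set hs)) {0..<d}"
  shows "(gen_ideal (polys_in {0..<Suc n}) (set ((f * Var n - 1) # hs)) \<inter> polys_in {0..<d} = {0}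
          \<and> gen_ideal (polys_in {0..<n}) (set (f # hs)) \<inter> polys_in {0..<d} = {0})
     \<longleftrightarrow> nonzero_zero_divisor_mod (KY_Z d n)
           (radical_in (KY_Z d n) (gen_ideal (KY_Z d n) ((\<lambda>h. Fract h 1) ` set hs)))
           (Fract f 1)"
proof -
  interpret setting n d "set hs" f
    using assms by unfold_locales auto
  have e: "(\<lambda>h. Fract h 1) = emb" by (rule ext) (simp add: emb_def)
  show ?thesis using main_iff[OF assms(4)] unfolding e by (simp add: emb_def)
qed

end
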